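(* Let $h>0$ be such that $D(q):=\big(I_d+\frac{h^2}{2}\nabla^2F(q)M\big)^{-1}$ exists for every $q\in\mathbb{R}^d$. Then for every $n\ge 1$ and every fixed realization of the Wiener increments, the map $(p,q)\mapsto(P^h[n],Q^h[n])$ defined by the scheme started at $(P^h[0],Q^h[0])=(p,q)$ has Jacobian determinant $$\det\frac{\partial(P^h[n],Q^h[n])}{\partial(p,q)}=e^{-v t_n d},\qquad t_n=nh.$$
   Context: Let $d\le m$, $F\in C^\infty(\mathbb{R}^d,\mathbb{R})$, $f=\nabla F$, $M\in\mathbb{R}^{d\times d}$ symmetric positive definite, $v>0$, $\sigma=(\sigma_1,\dots,\sigma_m)\in\mathbb{R}^{d\times m}$, $W$ a standard $m$-dimensional Wiener process. For a step size $h>0$, $t_n=nh$, $\Delta_{n+1}W=W(t_{n+1})-W(t_n)$, the scheme is $$P^h[n+1]=e^{-vh}P^h[n]-\tfrac{h^2}{2}\nabla^2F(Q^h[n])MP^h[n+1]-h\big(1+\tfrac{vh}{2}\big)e^{-vh}f(Q^h[n])-\big(1+\tfrac{vh}{2}\big)e^{-vh}\sigma\Delta_{n+1}W,$$ $$Q^h[n+1]=Q^h[n]+h\big(1-\tfrac{vh}{2}\big)e^{vh}MP^h[n+1]+\tfrac{h^2}{2}Mf(Q^h[n])+\tfrac{h}{2}M\sigma\Delta_{n+1}W,$$ with the first equation solved for $P^h[n+1]$. *)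

theory Defs
  imports "HOL-Analysis.Analysis"
begin

fun Ck :: "nat \<Rightarrow> ('a::real_normed_vector \<Rightarrow> 'b::real_normed_vector) \<Rightarrow> bool" where
  "Ck 0 g = continuous_on UNIV g"
| "Ck (Suc k) g = (continuous_on UNIV g \<and> (\<forall>x. g differentiable (at x)) \<and>
      (\<forall>u. Ck k (\<lambda>x. frechet_derivative g (at x) u)))"

definition smooth :: "('a::real_normed_vector \<Rightarrow> 'b::real_normed_vector) \<Rightarrow> bool" where
  "smooth g \<longleftrightarrow> (\<forall>k. Ck k g)"

definition grad :: "(real^'d \<Rightarrow> real) \<Rightarrow> real^'d \<Rightarrow> real^'d" where
  "grad F q = (\<chi> i. frechet_derivative F (at q) (axis i 1))"

definition hess :: "(real^'d \<Rightarrow> real) \<Rightarrow> real^'d \<Rightarrow> real^'d^'d" where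
  "hess F q = matrix (frechet_derivative (grad F) (at q))"

text \<open>One step of the scheme; the implicit P-equation is solved for P[n+1]
  using D(q) = (I + h^2/2 Hess F(q) M)^{-1}.\<close>
definition Dmat :: "(real^'d \<Rightarrow> real) \<Rightarrow> real^'d^'d \<Rightarrow> real \<Rightarrow> real^'d \<Rightarrow> real^'d^'d" where
  "Dmat F M h q = matrix_inv (mat 1 + (h^2/2) *\<^sub>R (hess F q ** M))"

definition stepP :: "(real^'d \<Rightarrow> real) \<Rightarrow> real^'d^'d \<Rightarrow> real \<Rightarrow> real^'m^'d \<Rightarrow> real
    \<Rightarrow> real^'m \<Rightarrow> real^'d \<Rightarrow> real^'d \<Rightarrow> real^'d" where
  "stepP F M v \<sigma> h w p q =
     Dmat F M h q *v (exp (- v * h) *\<^sub>R p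
        - (h * (1 + v * h/2) * exp (- v * h)) *\<^sub>R grad F q
        - ((1 + v * h/2) * exp (- v * h)) *\<^sub>R (\<sigma> *v w))"

definition stepQ :: "(real^'d \<Rightarrow> real) \<Rightarrow> real^'d^'d \<Rightarrow> real \<Rightarrow> real^'m^'d \<Rightarrow> real
    \<Rightarrow> real^'m \<Rightarrow> real^'d \<Rightarrow> real^'d \<Rightarrow> real^'d" where
  "stepQ F M v \<sigma> h w p q =
     q + (h * (1 - v * h/2) * exp (v * h)) *\<^sub>R (M *v stepP F M v \<sigma> h w p q)
       + (h^2/2) *\<^sub>R (M *v grad F q)
       + (h/2) *\<^sub>R (M *v (\<sigma> *v w))"

text \<open>The scheme: scheme ... dW n (p,q) = (P^h[n], Q^h[n]) started from (p,q),
  with dW (n+1) the Wiener increment W(t_{n+1}) - W(t_n).\<close>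
fun scheme :: "(real^'d \<Rightarrow> real) \<Rightarrow> real^'d^'d \<Rightarrow> real \<Rightarrow> real^'m^'d \<Rightarrow> real
    \<Rightarrow> (nat \<Rightarrow> real^'m) \<Rightarrow> nat \<Rightarrow> (real^'d) \<times> (real^'d) \<Rightarrow> (real^'d) \<times> (real^'d)" where
  "scheme F M v \<sigma> h dW 0 z = z"
| "scheme F M v \<sigma> h dW (Suc n) z =
     (let (p, q) = scheme F M v \<sigma> h dW n z
      in (stepP F M v \<sigma> h (dW (Suc n)) p q, stepQ F M v \<sigma> h (dW (Suc n)) p q))"

definition pack :: "(real^'d) \<times> (real^'d) \<Rightarrow> real^('d + 'd)" where
  "pack z = (\<chi> i. case i of Inl j \<Rightarrow> fst z $ j | Inr j \<Rightarrow> snd z $ j)"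

definition unpack :: "real^('d + 'd) \<Rightarrow> (real^'d) \<times> (real^'d)" where
  "unpack x = ((\<chi> j. x $ Inl j), (\<chi> j. x $ Inr j))"

end

theory Submission
  imports Defs
begin


definition blk :: "real^'a^'a \<Rightarrow> real^'a^'a \<Rightarrow> real^'a^'a \<Rightarrow> real^'a^'a \<Rightarrow> real^('a+'a)^('a+'a)" where
  "blk A B C E = (\<chi> i j. case i of Inl a \<Rightarrow> (case j of Inl b \<Rightarrow> A$a$b | Inr b \<Rightarrow> B$a$b)
                                | Inr a \<Rightarrow> (case j of Inl b \<Rightarrow> C$a$b | Inr b \<Rightarrow> E$a$b))"

lemma blk_nth[simp]:
  "blk A B C E $ Inl a $ Inl b = A$a$b" "blk A B C E $ Inl a $ Inr b = B$a$b"
  "blk A B C E $ Inr a $ Inl b = C$a$b" "blk A B C E $ Inr a $ Inr b = E$a$b"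
  by (simp_all add: blk_def)

lemma sum_UNIV_sum: "(\<Sum>k\<in>(UNIV::('a::finite+'b::finite) set). f k) = (\<Sum>k\<in>UNIV. f (Inl k)) + (\<Sum>k\<in>UNIV. f (Inr k))"
  by (subst UNIV_sum, subst sum.union_disjoint) (auto simp: sum.reindex)

lemma prod_UNIV_sum: "(\<Prod>k\<in>(UNIV::('a::finite+'b::finite) set). f k) = (\<Prod>k\<in>UNIV. f (Inl k)) * (\<Prod>k\<in>UNIV. f (Inr k))"
  by (subst UNIV_sum, subst prod.union_disjoint) (auto simp: prod.reindex)

lemma blk_mult: "blk A B C E ** blk A' B' C' E' =
  blk (A**A' + B**C') (A**B' + B**E') (C**A' + E**C') (C**B' + E**E')"
  unfolding vec_eq_iff
proof (intro allI)
  fix i j show "(blk A B C E ** blk A' B' C' E') $ i $ j = blk (A**A' + B**C') (A**B' + B**E') (C**A' + E**C') (C**B' + E**E') $ i $ j"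
    by (cases i; cases j) (simp_all add: matrix_matrix_mult_def sum_UNIV_sum)
qed

lemma transpose_blk: "transpose (blk A B C E) = blk (transpose A) (transpose C) (transpose B) (transpose E)"
  unfolding vec_eq_iff
proof (intro allI)
  fix i j show "transpose (blk A B C E) $ i $ j = blk (transpose A) (transpose C) (transpose B) (transpose E) $ i $ j"
    by (cases i; cases j) (simp_all add: transpose_def)
qed



lemma permutes_UNIV_bij: "p permutes UNIV \<longleftrightarrow> bij p"
  by (simp add: permutes_altdef)

lemma map_sum_pt: "map_sum f g (map_sum f' g' x) = map_sum (\<lambda>a. f (f' a)) (\<lambda>a. g (g' a)) x"
  by (cases x) auto

lemma map_sum_idid: "map_sum (\<lambda>a. a) (\<lambda>b. b) = id"
proof
  fix x show "map_sum (\<lambda>a. a) (\<lambda>b. b) x = id x" by (cases x) auto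
qed

lemma map_sum_permutes:
  assumes "p permutes UNIV" "q permutes UNIV"
  shows "map_sum p q permutes UNIV"
proof -
  have "map_sum (inv p) (inv q) \<circ> map_sum p q = id" "map_sum p q \<circ> map_sum (inv p) (inv q) = id"
    using permutes_inverses[OF assms(1)] permutes_inverses[OF assms(2)]
    by (simp_all add: fun_eq_iff map_sum_pt map_sum_idid)
  then show ?thesis unfolding permutes_UNIV_bij by (metis o_bij)
qed

lemma sign_map_sum_l:
  fixes p :: "'a::finite \<Rightarrow> 'a"
  assumes "p permutes UNIV"
  shows "sign (map_sum p (id::'b::finite\<Rightarrow>'b)) = sign p"
proof -
  have fU: "finite (UNIV::'a set)" by simp
  show ?thesis using assms fU
proof (induct rule: permutes_induct)
  case id
  then show ?case by (simp add: map_sum_idid sign_id)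
next
  case (swap a b p)
  have e: "map_sum (Transposition.transpose a b \<circ> p) (id::'b\<Rightarrow>'b) = Transposition.transpose (Inl a) (Inl b) \<circ> map_sum p id"
  proof
    fix x show "map_sum (Transposition.transpose a b \<circ> p) (id::'b\<Rightarrow>'b) x = (Transposition.transpose (Inl a) (Inl b) \<circ> map_sum p id) x"
      by (cases x) (simp_all add: Transposition.transpose_def)
  qed
  have pm: "permutation (map_sum p (id::'b\<Rightarrow>'b))"
    unfolding permutation_permutes using map_sum_permutes[OF swap(5) permutes_id] by (intro exI[of _ UNIV]) simp
  have pp: "permutation p" unfolding permutation_permutes using swap(5) fU by (intro exI[of _ UNIV]) simp
  have c1: "sign (Transposition.transpose (Inl a) (Inl b) \<circ> map_sum p (id::'b\<Rightarrow>'b)) = - sign (map_sum p (id::'b\<Rightarrow>'b))"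
    using sign_compose[OF permutation_swap_id pm] swap(3) by (simp add: sign_swap_id)
  have c2: "sign (Transposition.transpose a b \<circ> p) = - sign p"
    using sign_compose[OF permutation_swap_id pp] swap(3) by (simp add: sign_swap_id)
  show ?case unfolding e c1 c2 swap(4) ..
qed
qed

lemma sign_map_sum_r:
  fixes q :: "'b::finite \<Rightarrow> 'b"
  assumes "q permutes UNIV"
  shows "sign (map_sum (id::'a::finite\<Rightarrow>'a) q) = sign q"
proof -
  have fU: "finite (UNIV::'b set)" by simp
  show ?thesis using assms fU
proof (induct rule: permutes_induct)
  case id
  then show ?case by (simp add: map_sum_idid sign_id)
next
  case (swap a b p)
  have e: "map_sum (id::'a\<Rightarrow>'a) (Transposition.transpose a b \<circ> p) = Transposition.transpose (Inr a) (Inr b) \<circ> map_sum id p"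
  proof
    fix x show "map_sum (id::'a\<Rightarrow>'a) (Transposition.transpose a b \<circ> p) x = (Transposition.transpose (Inr a) (Inr b) \<circ> map_sum id p) x"
      by (cases x) (simp_all add: Transposition.transpose_def)
  qed
  have pm: "permutation (map_sum (id::'a\<Rightarrow>'a) p)"
    unfolding permutation_permutes using map_sum_permutes[OF permutes_id swap(5)] by (intro exI[of _ UNIV]) simp
  have pp: "permutation p" unfolding permutation_permutes using swap(5) fU by (intro exI[of _ UNIV]) simp
  have c1: "sign (Transposition.transpose (Inr a) (Inr b) \<circ> map_sum (id::'a\<Rightarrow>'a) p) = - sign (map_sum (id::'a\<Rightarrow>'a) p)"
    using sign_compose[OF permutation_swap_id pm] swap(3) by (simp add: sign_swap_id)
  have c2: "sign (Transposition.transpose a b \<circ> p) = - sign p"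
    using sign_compose[OF permutation_swap_id pp] swap(3) by (simp add: sign_swap_id)
  show ?case unfolding e c1 c2 swap(4) ..
qed
qed

lemma sign_map_sum:
  fixes p :: "'a::finite \<Rightarrow> 'a" and q :: "'b::finite \<Rightarrow> 'b"
  assumes "p permutes UNIV" "q permutes UNIV"
  shows "sign (map_sum p q) = sign p * sign q"
proof -
  have eq: "map_sum p q = map_sum p id \<circ> map_sum id q" by (simp add: fun_eq_iff map_sum_pt)
  have pm: "permutation (map_sum p (id::'b\<Rightarrow>'b))" "permutation (map_sum (id::'a\<Rightarrow>'a) q)"
    unfolding permutation_permutes using map_sum_permutes[OF assms(1) permutes_id] map_sum_permutes[OF permutes_id assms(2)]
    by (intro exI[of _ UNIV]; simp)+
  have "sign (map_sum p q) = sign (map_sum p id \<circ> map_sum id q)" by (subst eq) (rule refl)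
  also have "\<dots> = sign (map_sum p (id::'b\<Rightarrow>'b)) * sign (map_sum (id::'a\<Rightarrow>'a) q)" by (rule sign_compose[OF pm])
  also have "\<dots> = sign p * sign q" unfolding sign_map_sum_l[OF assms(1)] sign_map_sum_r[OF assms(2)] ..
  finally show ?thesis .
qed

lemma det_blk_upper: "det (blk A B 0 E) = det A * det E"
proof -
  let ?M = "blk A B 0 E"
  let ?t = "\<lambda>p. of_int (sign p) * (\<Prod>i\<in>UNIV. ?M $ i $ p i)"
  define P where "P = {p. p permutes (UNIV::('a+'a) set)}"
  define S where "S = {p\<in>P. \<forall>j. \<exists>k. p (Inr j) = Inr k}"
  have finP: "finite P" unfolding P_def by (simp add: finite_permutations)
  have "det ?M = sum ?t P" unfolding det_def P_def by (rule refl)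
  also have "\<dots> = sum ?t S"
  proof (rule sum.mono_neutral_right[OF finP])
    show "S \<subseteq> P" unfolding S_def by auto
    show "\<forall>p\<in>P - S. ?t p = 0"
    proof
      fix p assume "p \<in> P - S"
      then obtain j where j: "\<forall>k. p (Inr j) \<noteq> Inr k" unfolding S_def by auto
      then obtain k where "p (Inr j) = Inl k" by (cases "p (Inr j)") auto
      then have h0: "?M $ Inr j $ p (Inr j) = 0" by simp
      have "(\<Prod>i\<in>UNIV. ?M $ i $ p i) = 0"
      proof (rule prod_zero)
        show "\<exists>a\<in>UNIV. ?M $ a $ p a = 0" using h0 by blast
      qed simp
      then show "?t p = 0" by simp
    qed
  qed
  also have "S = (\<lambda>(p1,p2). map_sum p1 p2) ` ({p. p permutes (UNIV::'a set)} \<times> {p. p permutes (UNIV::'a set)})"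
  proof
    show "S \<subseteq> (\<lambda>(p1,p2). map_sum p1 p2) ` ({p. p permutes (UNIV::'a set)} \<times> {p. p permutes (UNIV::'a set)})"
    proof
      fix p assume pS: "p \<in> S"
      then have pp: "p permutes UNIV" and pr: "\<forall>j. \<exists>k. p (Inr j) = Inr k" unfolding S_def P_def by auto
      have injp: "inj p" using pp permutes_inj by blast
      have "p ` range Inr \<subseteq> range Inr" using pr by auto
      then have im: "p ` range Inr = range Inr"
        by (intro endo_inj_surj) (simp_all add: inj_on_subset[OF injp subset_UNIV])
      have pl: "\<forall>i. \<exists>k. p (Inl i) = Inl k"
      proof
        fix i show "\<exists>k. p (Inl i) = Inl k"
        proof (cases "p (Inl i)")
          case (Inr k)
          then have "Inr k \<in> p ` range Inr" using im by auto
          then obtain j where "p (Inr j) = Inr k" by auto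
          with Inr injp have "Inl i = Inr j" by (metis injD)
          then show ?thesis by simp
        qed auto
      qed
      define p1 where "p1 = (\<lambda>i. projl (p (Inl i)))"
      define p2 where "p2 = (\<lambda>i. projr (p (Inr i)))"
      have e1: "p (Inl i) = Inl (p1 i)" for i using pl p1_def by (metis sum.sel(1))
      have e2: "p (Inr i) = Inr (p2 i)" for i using pr p2_def by (metis sum.sel(2))
      have peq: "p = map_sum p1 p2"
      proof
        fix x show "p x = map_sum p1 p2 x" by (cases x) (simp_all add: e1 e2)
      qed
      have "inj p1"
      proof (rule injI)
        fix x y assume "p1 x = p1 y" then have "p (Inl x) = p (Inl y)" by (simp add: e1)
        then show "x = y" using injp by (simp add: inj_eq)
      qed
      then have "p1 permutes UNIV" unfolding permutes_UNIV_bij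
        by (simp add: bij_def finite_UNIV_inj_surj)
      moreover have "inj p2"
      proof (rule injI)
        fix x y assume "p2 x = p2 y" then have "p (Inr x) = p (Inr y)" by (simp add: e2)
        then show "x = y" using injp by (simp add: inj_eq)
      qed
      then have "p2 permutes UNIV" unfolding permutes_UNIV_bij
        by (simp add: bij_def finite_UNIV_inj_surj)
      ultimately show "p \<in> (\<lambda>(p1,p2). map_sum p1 p2) ` ({p. p permutes (UNIV::'a set)} \<times> {p. p permutes (UNIV::'a set)})"
        using peq by auto
    qed
  next
    have "map_sum p1 p2 \<in> S" if "p1 permutes UNIV" "p2 permutes UNIV" for p1 p2 :: "'a \<Rightarrow> 'a"
      unfolding S_def P_def using that by (simp add: map_sum_permutes)
    then show "(\<lambda>(p1,p2). map_sum p1 p2) ` ({p. p permutes (UNIV::'a set)} \<times> {p. p permutes (UNIV::'a set)}) \<subseteq> S"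
      by auto
  qed
  also have "sum ?t ((\<lambda>(p1,p2). map_sum p1 p2) ` ({p. p permutes (UNIV::'a set)} \<times> {p. p permutes (UNIV::'a set)}))
     = sum (?t \<circ> (\<lambda>(p1,p2). map_sum p1 p2)) ({p. p permutes (UNIV::'a set)} \<times> {p. p permutes (UNIV::'a set)})"
  proof (rule sum.reindex)
    show "inj_on (\<lambda>(p1,p2). map_sum p1 p2) ({p. p permutes (UNIV::'a set)} \<times> {p. p permutes (UNIV::'a set)})"
    proof (rule inj_onI, clarify)
      fix p1 p2 q1 q2 :: "'a \<Rightarrow> 'a"
      assume "map_sum p1 p2 = map_sum q1 q2"
      then have h: "\<And>x. map_sum p1 p2 x = map_sum q1 q2 x" by simp
      have "p1 x = q1 x" for x using h[of "Inl x"] by simp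
      moreover have "p2 x = q2 x" for x using h[of "Inr x"] by simp
      ultimately show "p1 = q1 \<and> p2 = q2" by auto
    qed
  qed
  also have "\<dots> = (\<Sum>(p1,p2)\<in>{p. p permutes (UNIV::'a set)} \<times> {p. p permutes (UNIV::'a set)}.
      (of_int (sign p1) * (\<Prod>i\<in>UNIV. A $ i $ p1 i)) * (of_int (sign p2) * (\<Prod>i\<in>UNIV. E $ i $ p2 i)))"
  proof (rule sum.cong[OF refl])
    fix pp assume "pp \<in> {p. p permutes (UNIV::'a set)} \<times> {p. p permutes (UNIV::'a set)}"
    then obtain p1 p2 where pp: "pp = (p1,p2)" "p1 permutes UNIV" "p2 permutes UNIV" by auto
    have "(\<Prod>i\<in>UNIV. ?M $ i $ map_sum p1 p2 i) = (\<Prod>i\<in>UNIV. A $ i $ p1 i) * (\<Prod>i\<in>UNIV. E $ i $ p2 i)"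
      unfolding prod_UNIV_sum by simp
    then show "(?t \<circ> (\<lambda>(p1,p2). map_sum p1 p2)) pp = (case pp of (p1,p2) \<Rightarrow>
      (of_int (sign p1) * (\<Prod>i\<in>UNIV. A $ i $ p1 i)) * (of_int (sign p2) * (\<Prod>i\<in>UNIV. E $ i $ p2 i)))"
      using pp by (simp add: sign_map_sum mult_ac)
  qed
  also have "\<dots> = det A * det E"
    by (simp only: det_def sum_product sum.cartesian_product)
  finally show ?thesis .
qed

lemma det_blk_lower: "det (blk A 0 C E) = det A * det E"
proof -
  have t0: "transpose (0::real^'a^'a) = 0" by (simp add: transpose_def vec_eq_iff)
  have "det (blk A 0 C E) = det (transpose (blk A 0 C E))" by simp
  also have "\<dots> = det A * det E" unfolding transpose_blk t0
    by (simp add: det_blk_upper)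
  finally show ?thesis .
qed



lemma mm_neg_r: "(A::real^'a^'b) ** (- B) = - (A ** B)"
  by (simp add: matrix_matrix_mult_def vec_eq_iff sum_negf)

lemma mm_add_r: "((A::real^'a^'b) + B) ** C = A ** C + B ** C"
  by (simp add: matrix_matrix_mult_def vec_eq_iff sum.distrib distrib_right)

lemma mm_neg_l: "(- (A::real^'a^'b)) ** B = - (A ** B)"
  by (simp add: matrix_matrix_mult_def vec_eq_iff sum_negf)

lemma sylvester:
  fixes X Y :: "real^'a^'a"
  shows "det (mat 1 + X ** Y) = det (mat 1 + Y ** X)"
proof -
  have e1: "blk (mat 1) (-X) Y (mat 1) = blk (mat 1) 0 Y (mat 1) ** blk (mat 1) (-X) 0 (mat 1 + Y**X)"
    by (simp add: blk_mult matrix_add_ldistrib mm_neg_r)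
  have e2: "blk (mat 1) (-X) Y (mat 1) = blk (mat 1 + X**Y) (-X) 0 (mat 1) ** blk (mat 1) 0 Y (mat 1)"
    by (simp add: blk_mult mm_add_r mm_neg_r mm_neg_l)
  have "det (mat 1 + Y ** X) = det (blk (mat 1) (-X) Y (mat 1))"
    unfolding e1 det_mul det_blk_lower det_blk_upper by simp
  also have "\<dots> = det (mat 1 + X ** Y)"
    unfolding e2 det_mul det_blk_lower det_blk_upper by simp
  finally show ?thesis by simp
qed

lemma has_derivative_vec_lambda:
  fixes f :: "'a::real_normed_vector \<Rightarrow> real^'n"
  assumes "\<And>i. ((\<lambda>x. f x $ i) has_derivative (\<lambda>h. f' h $ i)) (at a within S)"
  shows "(f has_derivative f') (at a within S)"
proof (rule has_derivative_componentwise_within[THEN iffD2], rule ballI)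
  fix b :: "real^'n" assume "b \<in> Basis"
  then obtain i where b: "b = axis i 1" using axis_inverse by blast
  have e: "\<And>z::real^'n. z \<bullet> b = z $ i" unfolding b by (rule cart_eq_inner_axis[symmetric])
  show "((\<lambda>x. f x \<bullet> b) has_derivative (\<lambda>x. f' x \<bullet> b)) (at a within S)"
    unfolding e by (rule assms)
qed

lemma differentiable_vec_lambda:
  fixes f :: "'a::real_normed_vector \<Rightarrow> real^'n"
  assumes "\<And>i. (\<lambda>x. f x $ i) differentiable (at a)"
  shows "f differentiable (at a)"
proof -
  have "\<forall>i. \<exists>D. ((\<lambda>x. f x $ i) has_derivative D) (at a)"
    using assms unfolding differentiable_def by auto
  from choice[OF this] obtain D where D: "\<And>i. ((\<lambda>x. f x $ i) has_derivative D i) (at a)" by blast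
  have "(f has_derivative (\<lambda>h. \<chi> i. D i h)) (at a)"
    by (rule has_derivative_vec_lambda) (simp add: D)
  then show ?thesis unfolding differentiable_def by blast
qed

lemma differentiable_vec_nth:
  fixes f :: "'a::real_normed_vector \<Rightarrow> real^'n"
  assumes "f differentiable (at a)"
  shows "(\<lambda>x. f x $ i) differentiable (at a)"
proof -
  obtain D where "(f has_derivative D) (at a)" using assms unfolding differentiable_def by blast
  from bounded_linear.has_derivative[OF bounded_linear_vec_nth this]
  show ?thesis unfolding differentiable_def by blast
qed

lemma differentiable_prod_real:
  fixes f :: "'i \<Rightarrow> 'a::real_normed_vector \<Rightarrow> real"
  assumes "finite S" "\<And>k. k \<in> S \<Longrightarrow> f k differentiable (at a)"
  shows "(\<lambda>x. \<Prod>k\<in>S. f k x) differentiable (at a)"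
  using assms
proof (induct S rule: finite_induct)
  case empty then show ?case by simp
next
  case (insert k S)
  have "(\<lambda>x. f k x * (\<Prod>k\<in>S. f k x)) differentiable (at a)"
    by (rule differentiable_mult) (use insert in auto)
  then show ?case unfolding prod.insert[OF insert(1,2)] .
qed

lemma differentiable_det:
  fixes X :: "'a::real_normed_vector \<Rightarrow> real^'n^'n"
  assumes "\<And>i j. (\<lambda>y. X y $ i $ j) differentiable (at a)"
  shows "(\<lambda>y. det (X y)) differentiable (at a)"
  unfolding det_def
proof (rule differentiable_sum)
  show "\<forall>p\<in>{p. p permutes UNIV}. (\<lambda>y. of_int (sign p) * (\<Prod>i\<in>UNIV. X y $ i $ p i)) differentiable (at a)"
  proof
    fix p
    have "(\<lambda>y. \<Prod>i\<in>UNIV. X y $ i $ p i) differentiable (at a)"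
      by (rule differentiable_prod_real) (simp_all add: assms)
    then show "(\<lambda>y. of_int (sign p) * (\<Prod>i\<in>UNIV. X y $ i $ p i)) differentiable (at a)"
      by (intro differentiable_mult differentiable_const)
  qed
qed (simp add: finite_permutations)



lemma smooth_facts:
  fixes F :: "real^'d \<Rightarrow> real"
  assumes "smooth F"
  shows "(\<lambda>y. frechet_derivative F (at y) u) differentiable (at x)"
    and "(\<lambda>y. frechet_derivative (\<lambda>z. frechet_derivative F (at z) u) (at y) w) differentiable (at x)"
proof -
  have "Ck (Suc (Suc (Suc 0))) F" using assms unfolding smooth_def by blast
  then have c2: "Ck (Suc (Suc 0)) (\<lambda>y. frechet_derivative F (at y) u)" by simp
  then show "(\<lambda>y. frechet_derivative F (at y) u) differentiable (at x)" by simp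
  from c2 have "Ck (Suc 0) (\<lambda>y. frechet_derivative (\<lambda>z. frechet_derivative F (at z) u) (at y) w)"
    by simp
  then show "(\<lambda>y. frechet_derivative (\<lambda>z. frechet_derivative F (at z) u) (at y) w) differentiable (at x)"
    by simp
qed

lemma grad_has_deriv:
  fixes F :: "real^'d \<Rightarrow> real"
  assumes "smooth F"
  shows "(grad F has_derivative (\<lambda>h. \<chi> i. frechet_derivative (\<lambda>z. frechet_derivative F (at z) (axis i 1)) (at q) h)) (at q)"
proof (rule has_derivative_vec_lambda)
  fix i
  have "(\<lambda>y. frechet_derivative F (at y) (axis i 1)) differentiable (at q)"
    using smooth_facts(1)[OF assms] .
  then have "((\<lambda>y. frechet_derivative F (at y) (axis i 1)) has_derivative
     frechet_derivative (\<lambda>z. frechet_derivative F (at z) (axis i 1)) (at q)) (at q)"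
    using frechet_derivative_works by blast
  then show "((\<lambda>x. grad F x $ i) has_derivative
      (\<lambda>h. (\<chi> i. frechet_derivative (\<lambda>z. frechet_derivative F (at z) (axis i 1)) (at q) h) $ i)) (at q)"
    by (simp add: grad_def)
qed

lemma grad_differentiable:
  fixes F :: "real^'d \<Rightarrow> real"
  assumes "smooth F"
  shows "grad F differentiable (at q)"
  using grad_has_deriv[OF assms] unfolding differentiable_def by blast

lemma grad_has_hess:
  fixes F :: "real^'d \<Rightarrow> real"
  assumes "smooth F"
  shows "(grad F has_derivative (\<lambda>h. hess F q *v h)) (at q)"
  using grad_differentiable[OF assms, of q] unfolding jacobian_works hess_def jacobian_def .

lemma hess_entry:
  fixes F :: "real^'d \<Rightarrow> real"
  assumes "smooth F"
  shows "hess F q $ i $ j = frechet_derivative (\<lambda>z. frechet_derivative F (at z) (axis i 1)) (at q) (axis j 1)"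
proof -
  have "frechet_derivative (grad F) (at q) = (\<lambda>h. \<chi> i. frechet_derivative (\<lambda>z. frechet_derivative F (at z) (axis i 1)) (at q) h)"
    using frechet_derivative_at[OF grad_has_deriv[OF assms]] by simp
  then show ?thesis unfolding hess_def matrix_def by simp
qed

lemma hess_entry_differentiable:
  fixes F :: "real^'d \<Rightarrow> real"
  assumes "smooth F"
  shows "(\<lambda>q. hess F q $ i $ j) differentiable (at q)"
  unfolding hess_entry[OF assms] using smooth_facts(2)[OF assms] .



lemma matrix_inv_props:
  fixes A :: "real^'n^'n"
  assumes "invertible A"
  shows "A ** matrix_inv A = mat 1" "matrix_inv A ** A = mat 1"
proof -
  have "\<exists>A'. A ** A' = mat 1 \<and> A' ** A = mat 1" using assms unfolding invertible_def by blast
  from someI_ex[OF this] show "A ** matrix_inv A = mat 1" "matrix_inv A ** A = mat 1"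
    unfolding matrix_inv_def by auto
qed

lemma mv_axis: "((A::real^'n^'m) *v axis b 1) $ j = A $ j $ b"
  by (simp add: matrix_vector_mult_def axis_def if_distrib cong: if_cong)

lemma has_derivative_nth_ident:
  "((\<lambda>y::real^'n. y $ i) has_derivative (\<lambda>h. h $ i)) F"
  using bounded_linear.has_derivative[OF bounded_linear_vec_nth has_derivative_ident] .

lemma pv_has_derivative:
  "((\<lambda>y::real^('a::finite+'b::finite). \<chi> j. y $ Inl j) has_derivative (\<lambda>y. \<chi> j. y $ Inl j)) (at z)"
  by (rule has_derivative_vec_lambda) (simp add: has_derivative_nth_ident)

lemma qv_has_derivative:
  "((\<lambda>y::real^('a::finite+'b::finite). \<chi> j. y $ Inr j) has_derivative (\<lambda>y. \<chi> j. y $ Inr j)) (at z)"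
  by (rule has_derivative_vec_lambda) (simp add: has_derivative_nth_ident)

lemma det_scaleR_mat: "det (a *\<^sub>R (D::real^'n^'n)) = a ^ CARD('n) * det D"
proof -
  have m: "a *\<^sub>R (mat 1 :: real^'n^'n) = mat a" by (simp add: mat_def vec_eq_iff)
  have "a *\<^sub>R D = a *\<^sub>R (mat 1 ** D)" by simp
  also have "\<dots> = mat a ** D" unfolding scalar_matrix_assoc m ..
  finally have "a *\<^sub>R D = mat a ** D" .
  moreover have "mat a = matrix ((*\<^sub>R) a :: real^'n \<Rightarrow> real^'n)" by (simp add: matrix_scaleR)
  ultimately show ?thesis by (simp add: det_mul)
qed



lemma step_deriv:
  fixes F :: "real^'d \<Rightarrow> real" and M :: "real^'d^'d" and \<sigma> :: "real^'m^'d"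
    and w :: "real^'m" and x :: "real^('d+'d)" and v h :: real
  assumes F: "smooth F"
    and D_ex: "\<forall>q. invertible (mat 1 + (h^2/2) *\<^sub>R (hess F q ** M))"
  shows "\<exists>K. ((\<lambda>y. pack (stepP F M v \<sigma> h w (\<chi> j. y $ Inl j) (\<chi> j. y $ Inr j),
                          stepQ F M v \<sigma> h w (\<chi> j. y $ Inl j) (\<chi> j. y $ Inr j)))
              has_derivative (\<lambda>z. K *v z)) (at x) \<and> det K = exp (- v * h) ^ CARD('d)"
proof -
  define pv :: "real^('d+'d) \<Rightarrow> real^'d" where "pv = (\<lambda>y. \<chi> j. y $ Inl j)"
  define qv :: "real^('d+'d) \<Rightarrow> real^'d" where "qv = (\<lambda>y. \<chi> j. y $ Inr j)"
  define c where "c = h^2/2"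
  define a where "a = exp (- v * h)"
  define bb where "bb = h * (1 + v * h/2) * exp (- v * h)"
  define ee where "ee = (1 + v * h/2) * exp (- v * h)"
  define kk where "kk = h * (1 - v * h/2) * exp (v * h)"
  define A where "A = (\<lambda>q. mat 1 + c *\<^sub>R (hess F q ** M))"
  define u where "u = (\<lambda>y. a *\<^sub>R pv y - bb *\<^sub>R grad F (qv y) - ee *\<^sub>R (\<sigma> *v w))"
  define Pn where "Pn = (\<lambda>y. stepP F M v \<sigma> h w (pv y) (qv y))"
  have Pn_eq: "Pn y = matrix_inv (A (qv y)) *v u y" for y
    unfolding Pn_def stepP_def Dmat_def A_def u_def c_def a_def bb_def ee_def by simp
  have invA: "invertible (A q)" for q using D_ex unfolding A_def c_def by blast
  have AinvA: "A q ** matrix_inv (A q) = mat 1" for q using matrix_inv_props[OF invA] by auto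
  have detA: "det (A q) \<noteq> 0" for q using invA invertible_det_nz by blast
  have pv_d: "(pv has_derivative pv) (at z)" for z unfolding pv_def by (rule pv_has_derivative)
  have qv_d: "(qv has_derivative qv) (at z)" for z unfolding qv_def by (rule qv_has_derivative)
  have pv_diff: "pv differentiable (at z)" for z using pv_d unfolding differentiable_def by blast
  have qv_diff: "qv differentiable (at z)" for z using qv_d unfolding differentiable_def by blast
  have gq_diff: "(\<lambda>y. grad F (qv y)) differentiable (at z)" for z
    by (rule differentiable_compose[OF grad_differentiable[OF F] qv_diff])
  have u_diff: "u differentiable (at z)" for z
    unfolding u_def
    by (intro differentiable_diff differentiable_scaleR differentiable_const pv_diff gq_diff)
  have ui_diff: "(\<lambda>y. u y $ i) differentiable (at z)" for z i
    by (rule differentiable_vec_nth[OF u_diff])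
  have hq_diff: "(\<lambda>y. hess F (qv y) $ i $ j) differentiable (at z)" for z i j
    by (rule differentiable_compose[OF hess_entry_differentiable[OF F] qv_diff])
  have Aij_diff: "(\<lambda>y. A (qv y) $ i $ j) differentiable (at z)" for z i j
  proof -
    have e: "(\<lambda>y. A (qv y) $ i $ j) = (\<lambda>y. mat 1 $ i $ j + c * (\<Sum>k\<in>UNIV. hess F (qv y) $ i $ k * M $ k $ j))"
      unfolding A_def by (simp add: matrix_matrix_mult_def)
    show ?thesis unfolding e
      by (intro differentiable_add differentiable_const differentiable_mult differentiable_sum ballI finite hq_diff)
  qed
  have Pn_comp: "Pn y $ k = det (\<chi> i j. if j = k then u y $ i else A (qv y) $ i $ j) / det (A (qv y))" for y k
  proof -
    have "A (qv y) *v Pn y = u y"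
      unfolding Pn_eq matrix_vector_mul_assoc AinvA by simp
    then have "Pn y = (\<chi> k. det (\<chi> i j. if j = k then u y $ i else A (qv y) $ i $ j) / det (A (qv y)))"
      using cramer[OF detA] by blast
    then show ?thesis by simp
  qed
  have Pn_diff: "Pn differentiable (at z)" for z
  proof (rule differentiable_vec_lambda)
    fix k
    have "(\<lambda>y. det (\<chi> i j. if j = k then u y $ i else A (qv y) $ i $ j)) differentiable (at z)"
    proof (rule differentiable_det)
      fix i j
      show "(\<lambda>y. (\<chi> i j. if j = k then u y $ i else A (qv y) $ i $ j) $ i $ j) differentiable (at z)"
        by (cases "j = k") (simp_all add: ui_diff Aij_diff)
    qed
    moreover have "(\<lambda>y. det (A (qv y))) differentiable (at z)"
      by (rule differentiable_det) (simp add: Aij_diff)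
    ultimately show "(\<lambda>y. Pn y $ k) differentiable (at z)"
      unfolding Pn_comp by (intro differentiable_divide detA)
  qed
  obtain LP where LP: "(Pn has_derivative LP) (at x)" using Pn_diff unfolding differentiable_def by blast
  define q0 where "q0 = qv x"
  define D0 where "D0 = matrix_inv (A q0)"
  define emb0 :: "real^'d \<Rightarrow> real^('d+'d)" where "emb0 = (\<lambda>p. \<chi> i. case i of Inl j \<Rightarrow> p $ j | Inr j \<Rightarrow> 0)"
  define ge :: "real^'d \<Rightarrow> real^('d+'d)" where "ge = (\<lambda>p. \<chi> i. case i of Inl j \<Rightarrow> p $ j | Inr j \<Rightarrow> q0 $ j)"
  have ge_x: "ge (pv x) = x"
    unfolding vec_eq_iff
  proof
    fix i show "ge (pv x) $ i = x $ i" by (cases i) (simp_all add: ge_def pv_def q0_def qv_def)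
  qed
  have ge_d: "(ge has_derivative emb0) (at (pv x))"
  proof (rule has_derivative_vec_lambda)
    fix i
    show "((\<lambda>p. ge p $ i) has_derivative (\<lambda>h. emb0 h $ i)) (at (pv x))"
    proof (cases i)
      case (Inl j)
      then show ?thesis by (simp add: ge_def emb0_def has_derivative_nth_ident)
    next
      case (Inr j)
      then show ?thesis by (simp add: ge_def emb0_def)
    qed
  qed
  define C where "C = bb *\<^sub>R grad F q0 + ee *\<^sub>R (\<sigma> *v w)"
  have Pn_ge: "Pn (ge p) = D0 *v (a *\<^sub>R p - C)" for p
  proof -
    have "pv (ge p) = p" "qv (ge p) = q0" by (simp_all add: pv_def qv_def ge_def)
    then show ?thesis unfolding Pn_eq D0_def u_def C_def by (simp add: algebra_simps)
  qed
  have d1: "((\<lambda>p. Pn (ge p)) has_derivative (\<lambda>dp. D0 *v (a *\<^sub>R dp))) (at (pv x))"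
  proof -
    have "((\<lambda>p. a *\<^sub>R p - C) has_derivative (\<lambda>dp. a *\<^sub>R dp)) (at (pv x))"
      by (auto intro!: derivative_eq_intros)
    from bounded_linear.has_derivative[OF matrix_vector_mul_bounded_linear this, of D0]
    show ?thesis unfolding Pn_ge .
  qed
  have d2: "((\<lambda>p. Pn (ge p)) has_derivative (\<lambda>dp. LP (emb0 dp))) (at (pv x))"
  proof -
    have "(Pn has_derivative LP) (at (ge (pv x)))" using LP ge_x by simp
    from diff_chain_at[OF ge_d this] show ?thesis by (simp add: o_def)
  qed
  have LPe: "LP (emb0 dp) = a *\<^sub>R (D0 *v dp)" for dp
    using has_derivative_unique[OF d2 d1] by (simp add: fun_eq_iff matrix_vector_mult_scaleR)
  define S1 where "S1 = (\<lambda>y. \<chi> i. case i of Inl j \<Rightarrow> Pn y $ j | Inr j \<Rightarrow> y $ Inr j)"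
  define L1 where "L1 = (\<lambda>dy. \<chi> i. case i of Inl j \<Rightarrow> LP dy $ j | Inr j \<Rightarrow> dy $ Inr j)"
  have S1_d: "(S1 has_derivative L1) (at x)"
  proof (rule has_derivative_vec_lambda)
    fix i
    show "((\<lambda>y. S1 y $ i) has_derivative (\<lambda>h. L1 h $ i)) (at x)"
    proof (cases i)
      case (Inl j)
      then show ?thesis using bounded_linear.has_derivative[OF bounded_linear_vec_nth LP, of j]
        by (simp add: S1_def L1_def)
    next
      case (Inr j)
      then show ?thesis by (simp add: S1_def L1_def has_derivative_nth_ident)
    qed
  qed
  define Y where "Y = (\<chi> i j. LP (axis (Inr j) 1) $ i)"
  have axl: "axis (Inl j) 1 = emb0 (axis j 1)" for j
    unfolding vec_eq_iff
  proof
    fix i show "axis (Inl j) (1::real) $ i = emb0 (axis j 1) $ i"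
      by (cases i) (simp_all add: emb0_def axis_def)
  qed
  have mL1: "matrix L1 = blk (a *\<^sub>R D0) Y 0 (mat 1)"
    unfolding vec_eq_iff
  proof (intro allI)
    fix r s
    show "matrix L1 $ r $ s = blk (a *\<^sub>R D0) Y 0 (mat 1) $ r $ s"
    proof (cases r)
      case (Inl i)
      then show ?thesis
      proof (cases s)
        case (Inl j)
        then show ?thesis using \<open>r = Inl i\<close> by (simp add: matrix_def L1_def axl LPe mv_axis)
      next
        case (Inr j)
        then show ?thesis using \<open>r = Inl i\<close> by (simp add: matrix_def L1_def Y_def)
      qed
    next
      case (Inr i)
      then show ?thesis
        by (cases s) (simp_all add: matrix_def L1_def axis_def mat_def)
    qed
  qed
  define H0 where "H0 = hess F q0"
  define R where "R = (\<lambda>z. qv z + kk *\<^sub>R (M *v pv z) + c *\<^sub>R (M *v grad F (qv z)) + (h/2) *\<^sub>R (M *v (\<sigma> *v w)))"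
  define R' where "R' = (\<lambda>dz. qv dz + kk *\<^sub>R (M *v pv dz) + c *\<^sub>R (M *v (H0 *v qv dz)))"
  define S2 where "S2 = (\<lambda>z. \<chi> i. case i of Inl j \<Rightarrow> z $ Inl j | Inr j \<Rightarrow> R z $ j)"
  define L2 where "L2 = (\<lambda>dz. \<chi> i. case i of Inl j \<Rightarrow> dz $ Inl j | Inr j \<Rightarrow> R' dz $ j)"
  have qS1: "qv (S1 y) = qv y" for y by (simp add: qv_def S1_def)
  have pS1: "pv (S1 y) = Pn y" for y by (simp add: pv_def S1_def)
  have R_d: "(R has_derivative R') (at (S1 x))"
  proof -
    have g: "((\<lambda>z. grad F (qv z)) has_derivative (\<lambda>dz. H0 *v qv dz)) (at (S1 x))"
    proof -
      have "(grad F has_derivative (\<lambda>h. H0 *v h)) (at (qv (S1 x)))"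
        unfolding qS1 H0_def q0_def by (rule grad_has_hess[OF F])
      from diff_chain_at[OF qv_d this] show ?thesis by (simp add: o_def)
    qed
    have m1: "((\<lambda>z. M *v pv z) has_derivative (\<lambda>dz. M *v pv dz)) (at (S1 x))"
      by (rule bounded_linear.has_derivative[OF matrix_vector_mul_bounded_linear pv_d])
    have m2: "((\<lambda>z. M *v grad F (qv z)) has_derivative (\<lambda>dz. M *v (H0 *v qv dz))) (at (S1 x))"
      by (rule bounded_linear.has_derivative[OF matrix_vector_mul_bounded_linear g])
    have "((\<lambda>z. qv z + kk *\<^sub>R (M *v pv z) + c *\<^sub>R (M *v grad F (qv z)) + (h/2) *\<^sub>R (M *v (\<sigma> *v w)))
      has_derivative (\<lambda>dz. qv dz + kk *\<^sub>R (M *v pv dz) + c *\<^sub>R (M *v (H0 *v qv dz)) + 0)) (at (S1 x))"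
      by (intro has_derivative_add has_derivative_scaleR_right qv_d m1 m2 has_derivative_const)
    then show ?thesis unfolding R_def R'_def by simp
  qed
  have S2_d: "(S2 has_derivative L2) (at (S1 x))"
  proof (rule has_derivative_vec_lambda)
    fix i
    show "((\<lambda>y. S2 y $ i) has_derivative (\<lambda>h. L2 h $ i)) (at (S1 x))"
    proof (cases i)
      case (Inl j)
      then show ?thesis by (simp add: S2_def L2_def has_derivative_nth_ident)
    next
      case (Inr j)
      then show ?thesis using bounded_linear.has_derivative[OF bounded_linear_vec_nth R_d, of j]
        by (simp add: S2_def L2_def)
    qed
  qed
  have pax: "pv (axis (Inl b) 1) = axis b 1" "pv (axis (Inr b) 1) = 0"
    "qv (axis (Inl b) 1) = 0" "qv (axis (Inr b) 1) = axis b 1" for b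
    by (simp_all add: pv_def qv_def axis_def vec_eq_iff)
  have mL2: "matrix L2 = blk (mat 1) 0 (kk *\<^sub>R M) (mat 1 + c *\<^sub>R (M ** H0))"
    unfolding vec_eq_iff
  proof (intro allI)
    fix r s
    show "matrix L2 $ r $ s = blk (mat 1) 0 (kk *\<^sub>R M) (mat 1 + c *\<^sub>R (M ** H0)) $ r $ s"
    proof (cases r)
      case (Inl i)
      then show ?thesis
        by (cases s) (simp_all add: matrix_def L2_def axis_def mat_def)
    next
      case (Inr i)
      then show ?thesis
      proof (cases s)
        case (Inl j)
        then show ?thesis using \<open>r = Inr i\<close> by (simp add: matrix_def L2_def R'_def pax mv_axis)
      next
        case (Inr j)
        then show ?thesis using \<open>r = Inr i\<close>
          by (simp add: matrix_def L2_def R'_def pax mv_axis matrix_vector_mul_assoc)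
             (simp add: axis_def mat_def)
      qed
    qed
  qed
  have S_eq: "(\<lambda>y. pack (stepP F M v \<sigma> h w (\<chi> j. y $ Inl j) (\<chi> j. y $ Inr j),
                          stepQ F M v \<sigma> h w (\<chi> j. y $ Inl j) (\<chi> j. y $ Inr j))) = S2 \<circ> S1"
  proof
    fix y
    show "pack (stepP F M v \<sigma> h w (\<chi> j. y $ Inl j) (\<chi> j. y $ Inr j),
                stepQ F M v \<sigma> h w (\<chi> j. y $ Inl j) (\<chi> j. y $ Inr j)) = (S2 \<circ> S1) y"
      unfolding vec_eq_iff
    proof
      fix i show "pack (stepP F M v \<sigma> h w (\<chi> j. y $ Inl j) (\<chi> j. y $ Inr j),
                stepQ F M v \<sigma> h w (\<chi> j. y $ Inl j) (\<chi> j. y $ Inr j)) $ i = (S2 \<circ> S1) y $ i"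
      proof (cases i)
        case (Inl j)
        then show ?thesis by (simp add: pack_def S2_def S1_def Pn_def pv_def qv_def)
      next
        case (Inr j)
        have "R (S1 y) = stepQ F M v \<sigma> h w (\<chi> j. y $ Inl j) (\<chi> j. y $ Inr j)"
          unfolding R_def qS1 pS1 unfolding stepQ_def Pn_def kk_def c_def pv_def qv_def ..
        then show ?thesis using Inr by (simp add: pack_def S2_def)
      qed
    qed
  qed
  have Sd: "((S2 \<circ> S1) has_derivative (L2 \<circ> L1)) (at x)"
    by (rule diff_chain_at[OF S1_d S2_d])
  have linL1: "linear L1" using S1_d by (rule has_derivative_linear)
  have linL2: "linear L2" using S2_d by (rule has_derivative_linear)
  define K where "K = matrix L2 ** matrix L1"
  have mK: "matrix (L2 \<circ> L1) = K" unfolding K_def by (rule matrix_compose[OF linL1 linL2])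
  have LK: "(L2 \<circ> L1) = (\<lambda>z. K *v z)"
    using matrix_vector_mul(2)[OF linear_compose[OF linL1 linL2]] unfolding mK by (simp add: o_def)
  have A0: "A q0 ** D0 = mat 1" unfolding D0_def by (rule AinvA)
  have dAD: "det (A q0) * det D0 = 1" using arg_cong[OF A0, of det] by (simp add: det_mul)
  have syl: "det (mat 1 + c *\<^sub>R (M ** H0)) = det (A q0)"
  proof -
    have "c *\<^sub>R (M ** H0) = M ** (c *\<^sub>R H0)" by (simp add: matrix_scalar_ac scalar_matrix_assoc)
    moreover have "c *\<^sub>R (H0 ** M) = (c *\<^sub>R H0) ** M" by (simp add: scalar_matrix_assoc)
    ultimately show ?thesis unfolding A_def H0_def[symmetric] using sylvester[of M "c *\<^sub>R H0"] by simp
  qed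
  have "det K = det (A q0) * (a ^ CARD('d) * det D0)"
    unfolding K_def det_mul mL1 mL2 det_blk_lower det_blk_upper det_scaleR_mat syl by simp
  also have "\<dots> = a ^ CARD('d)" using dAD by (simp add: algebra_simps)
  finally have "det K = exp (- v * h) ^ CARD('d)" unfolding a_def .
  moreover have "((S2 \<circ> S1) has_derivative (\<lambda>z. K *v z)) (at x)" using Sd unfolding LK .
  ultimately show ?thesis unfolding S_eq by blast
qed



lemma pack_unpack: "pack (unpack y) = (y::real^('d::finite+'d))"
  unfolding vec_eq_iff
proof
  fix i show "pack (unpack y) $ i = y $ i" by (cases i) (simp_all add: pack_def unpack_def)
qed

lemma pack_Inl: "(\<chi> j. pack (p, q) $ Inl j) = p" and pack_Inr: "(\<chi> j. pack (p, q) $ Inr j) = q"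
  by (simp_all add: pack_def)

lemma scheme_deriv:
  fixes F :: "real^'d \<Rightarrow> real" and M :: "real^'d^'d" and \<sigma> :: "real^'m^'d"
    and dW :: "nat \<Rightarrow> real^'m" and v h :: real
  assumes F: "smooth F"
    and D_ex: "\<forall>q. invertible (mat 1 + (h^2/2) *\<^sub>R (hess F q ** M))"
  shows "\<forall>x::real^('d+'d). \<exists>K. ((\<lambda>y. pack (scheme F M v \<sigma> h dW n (unpack y))) has_derivative (\<lambda>z. K *v z)) (at x)
            \<and> det K = (exp (- v * h) ^ CARD('d)) ^ n"
proof (induction n)
  case 0
  show ?case
  proof
    fix x :: "real^('d+'d)"
    have "((\<lambda>y. pack (scheme F M v \<sigma> h dW 0 (unpack y))) has_derivative (\<lambda>z. mat 1 *v z)) (at x)"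
      by (simp add: pack_unpack)
    then show "\<exists>K. ((\<lambda>y. pack (scheme F M v \<sigma> h dW 0 (unpack y))) has_derivative (\<lambda>z. K *v z)) (at x)
            \<and> det K = (exp (- v * h) ^ CARD('d)) ^ 0" by (intro exI[of _ "mat 1"]) simp
  qed
next
  case (Suc n)
  define S where "S = (\<lambda>y::real^('d+'d). pack (stepP F M v \<sigma> h (dW (Suc n)) (\<chi> j. y $ Inl j) (\<chi> j. y $ Inr j),
                          stepQ F M v \<sigma> h (dW (Suc n)) (\<chi> j. y $ Inl j) (\<chi> j. y $ Inr j)))"
  define Phi where "Phi = (\<lambda>y. pack (scheme F M v \<sigma> h dW n (unpack y)))"
  have eq: "(\<lambda>y. pack (scheme F M v \<sigma> h dW (Suc n) (unpack y))) = S \<circ> Phi"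
  proof
    fix y
    obtain p q where pq: "scheme F M v \<sigma> h dW n (unpack y) = (p, q)" by fastforce
    show "pack (scheme F M v \<sigma> h dW (Suc n) (unpack y)) = (S \<circ> Phi) y"
      by (simp add: pq S_def Phi_def pack_Inl pack_Inr)
  qed
  show ?case
  proof
    fix x :: "real^('d+'d)"
    obtain K where K: "(Phi has_derivative (\<lambda>z. K *v z)) (at x)" "det K = (exp (- v * h) ^ CARD('d)) ^ n"
      using Suc.IH unfolding Phi_def by blast
    obtain KS where KS: "(S has_derivative (\<lambda>z. KS *v z)) (at (Phi x))" "det KS = exp (- v * h) ^ CARD('d)"
      using step_deriv[where x="Phi x" and w="dW (Suc n)" and \<sigma>=\<sigma> and v=v, OF F D_ex] unfolding S_def by blast
    have "((S \<circ> Phi) has_derivative ((\<lambda>z. KS *v z) \<circ> (\<lambda>z. K *v z))) (at x)"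
      by (rule diff_chain_at[OF K(1) KS(1)])
    moreover have "(\<lambda>z. KS *v z) \<circ> (\<lambda>z. K *v z) = (\<lambda>z. (KS ** K) *v z)"
      by (simp add: o_def matrix_vector_mul_assoc)
    moreover have "det (KS ** K) = (exp (- v * h) ^ CARD('d)) ^ Suc n"
      by (simp add: det_mul K(2) KS(2))
    ultimately show "\<exists>K. ((\<lambda>y. pack (scheme F M v \<sigma> h dW (Suc n) (unpack y))) has_derivative (\<lambda>z. K *v z)) (at x)
            \<and> det K = (exp (- v * h) ^ CARD('d)) ^ Suc n"
      unfolding eq by metis
  qed
qed

theorem mainTheorem2:
  fixes F :: "real^'d \<Rightarrow> real"
    and M :: "real^'d^'d"
    and \<sigma> :: "real^'m^'d"
    and v h :: real
    and dW :: "nat \<Rightarrow> real^'m"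
    and n :: nat
  assumes dm: "CARD('d) \<le> CARD('m)"
    and F_smooth: "smooth F"
    and M_sym: "transpose M = M"
    and M_pos: "\<forall>x. x \<noteq> 0 \<longrightarrow> x \<bullet> (M *v x) > 0"
    and v_pos: "v > 0"
    and h_pos: "h > 0"
    and D_ex: "\<forall>q. invertible (mat 1 + (h^2/2) *\<^sub>R (hess F q ** M))"
    and n_ge: "n \<ge> 1"
  shows "\<forall>x::real^('d + 'd).
           (\<lambda>y. pack (scheme F M v \<sigma> h dW n (unpack y))) differentiable (at x) \<and>
           det (matrix (frechet_derivative (\<lambda>y. pack (scheme F M v \<sigma> h dW n (unpack y))) (at x)))
             = exp (- v * (real n * h) * real CARD('d))"
proof
  fix x :: "real^('d+'d)"
  obtain K where K: "((\<lambda>y. pack (scheme F M v \<sigma> h dW n (unpack y))) has_derivative (\<lambda>z. K *v z)) (at x)"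
      "det K = (exp (- v * h) ^ CARD('d)) ^ n"
    using scheme_deriv[where \<sigma>=\<sigma> and dW=dW and n=n and v=v, OF F_smooth D_ex] by blast
  have fd: "frechet_derivative (\<lambda>y. pack (scheme F M v \<sigma> h dW n (unpack y))) (at x) = (\<lambda>z. K *v z)"
    using frechet_derivative_at[OF K(1)] by simp
  have "(exp (- v * h) ^ CARD('d)) ^ n = exp (- v * (real n * h) * real CARD('d))"
  proof -
    have "(exp (- v * h) ^ CARD('d)) ^ n = exp (- v * h) ^ (CARD('d) * n)" by (simp add: power_mult)
    also have "\<dots> = exp (real (CARD('d) * n) * (- v * h))" by (rule exp_of_nat_mult[symmetric])
    also have "\<dots> = exp (- v * (real n * h) * real CARD('d))" by (simp add: algebra_simps)
    finally show ?thesis .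
  qed
  then show "(\<lambda>y. pack (scheme F M v \<sigma> h dW n (unpack y))) differentiable (at x) \<and>
           det (matrix (frechet_derivative (\<lambda>y. pack (scheme F M v \<sigma> h dW n (unpack y))) (at x)))
             = exp (- v * (real n * h) * real CARD('d))"
    using K unfolding fd differentiable_def by auto
qed


end
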